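(* For all $\alpha\in(0,\pi/4]$ and $\beta\in[0,t(\alpha)]$, $$\max_{r\in[0,1]} f_1(\alpha,\beta,r)\ \ge\ \tfrac12\sqrt{6-2\cos(4\alpha)}.$$
   Context: $f_1(\alpha,\beta,r)=\frac{2\sin\alpha}{\cos\beta(\tan\alpha+\tan\beta)}\cdot\frac{1+\frac{2\tan\beta}{\tan\alpha+\tan\beta}r}{\sqrt{1+r^2+2\cos(2\alpha)r}}$, and $t(\alpha)=\arctan\!\left(\frac{\sin(3\alpha)-\sin\alpha}{3\cos\alpha-\cos(3\alpha)}\right)$. *)

theory Defs
  imports "HOL-Analysis.Analysis"
begin

definition f1 :: "real \<Rightarrow> real \<Rightarrow> real \<Rightarrow> real" where
  "f1 \<alpha> \<beta> r = (2 * sin \<alpha>) / (cos \<beta> * (tan \<alpha> + tan \<beta>)) *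
     ((1 + (2 * tan \<beta>) / (tan \<alpha> + tan \<beta>) * r) /
      sqrt (1 + r^2 + 2 * cos (2 * \<alpha>) * r))"

definition t :: "real \<Rightarrow> real" where
  "t \<alpha> = arctan ((sin (3 * \<alpha>) - sin \<alpha>) / (3 * cos \<alpha> - cos (3 * \<alpha>)))"

end

theory Submission
  imports Defs
begin

lemma key_ineq:
  fixes s c u x :: real
  assumes sc: "s^2 + c^2 = 1" and sp: "0 < s" and cp: "0 < c" and d: "s^2 \<le> c^2"
    and x: "x = s * (c^2 - s^2) / (c * (1 + 2 * s^2))"
    and u0: "0 \<le> u" and ux: "u \<le> x"
  shows "(s + c * u)^2 * (1 + 4 * s^2 * c^2) \<le> 4 * s^2 * c^2 * (1 + u^2)"
proof -
  define g where "g v = 4 * s^2 * c^2 * (1 + v^2) - (s + c * v)^2 * (1 + 4 * s^2 * c^2)" for v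
  have gx: "g x = 0"
  proof -
    have "0 < 1 + 2 * s^2" by (simp add: add_pos_nonneg)
    hence "c * (1 + 2 * s^2) \<noteq> 0" using cp by simp
    have xq: "x * (c * (1 + 2 * s^2)) = s * (c^2 - s^2)" unfolding x using \<open>c * (1 + 2 * s^2) \<noteq> 0\<close> by simp
    have "g x * (c * (1 + 2 * s^2))^2 = 0" unfolding g_def using xq sc by algebra
    thus ?thesis using \<open>c * (1 + 2 * s^2) \<noteq> 0\<close> by simp
  qed
  have gdiff: "g u - g x = (x - u) * (2 * s * c * (1 + 4 * s^2 * c^2) + c^2 * (1 - 4 * s^2 * s^2) * (u + x))"
    unfolding g_def using sc by algebra
  have cq: "0 < c * (1 + 2 * s^2)" using cp by (intro mult_pos_pos add_pos_nonneg) auto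
  have x0: "0 \<le> x" unfolding x using sp d cq by (intro divide_nonneg_pos mult_nonneg_nonneg) auto
  have "s^2 \<le> 1/2" using sc d by linarith
  hence "s^2 * s^2 \<le> (1/2) * (1/2)" by (intro mult_mono) auto
  hence "4 * (s^2 * s^2) \<le> 1" by linarith
  hence "4 * s^2 * s^2 \<le> 1" by (simp only: mult.assoc)
  hence "0 \<le> 2 * s * c * (1 + 4 * s^2 * c^2) + c^2 * (1 - 4 * s^2 * s^2) * (u + x)"
    using sp cp u0 x0 by (intro add_nonneg_nonneg mult_nonneg_nonneg) auto
  hence "0 \<le> g u - g x" unfolding gdiff using ux by simp
  thus ?thesis using gx unfolding g_def by simp
qed

lemma aux_div:
  fixes D A N :: real
  assumes "D^2 * A \<le> N^2" "0 < D"
  shows "A \<le> (N / D)^2"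
proof -
  have "0 < D^2" using assms by simp
  thus ?thesis using assms(1) by (simp add: power_divide pos_le_divide_eq mult.commute)
qed

theorem lemma9:
  fixes \<alpha> \<beta> :: real
  assumes "0 < \<alpha>" and "\<alpha> \<le> pi / 4"
    and "0 \<le> \<beta>" and "\<beta> \<le> t \<alpha>"
  shows "(SUP r\<in>{0..1}. f1 \<alpha> \<beta> r) \<ge> sqrt (6 - 2 * cos (4 * \<alpha>)) / 2"
proof -
  define s where "s = sin \<alpha>"
  define c where "c = cos \<alpha>"
  have sp: "0 < s" unfolding s_def using assms by (intro sin_gt_zero) (auto simp: pi_gt_zero)
  have cp: "0 < c" unfolding c_def using assms by (intro cos_gt_zero_pi) auto
  have sc: "s^2 + c^2 = 1" unfolding s_def c_def by simp
  have c2: "0 \<le> cos (2*\<alpha>)" using assms by (intro cos_ge_zero) auto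
  hence d: "s^2 \<le> c^2" unfolding s_def c_def by (simp add: cos_double)
  define x where "x = s * (c^2 - s^2) / (c * (1 + 2 * s^2))"
  have s3: "sin (3*\<alpha>) = 3 * s - 4 * s^3"
  proof -
    have "sin (3*\<alpha>) = sin (2*\<alpha> + \<alpha>)" by simp
    also have "\<dots> = 2 * s * c * c + (c^2 - s^2) * s" unfolding sin_add sin_double cos_double s_def c_def by simp
    finally show ?thesis using sc by algebra
  qed
  have c3: "cos (3*\<alpha>) = 4 * c^3 - 3 * c"
  proof -
    have "cos (3*\<alpha>) = cos (2*\<alpha> + \<alpha>)" by simp
    also have "\<dots> = (c^2 - s^2) * c - 2 * s * c * s" unfolding cos_add sin_double cos_double s_def c_def by simp
    finally show ?thesis using sc by algebra
  qed
  have tx: "t \<alpha> = arctan x"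
  proof -
    have "(sin (3 * \<alpha>) - sin \<alpha>) / (3 * cos \<alpha> - cos (3 * \<alpha>)) = x"
      unfolding s3 c3 x_def s_def[symmetric] c_def[symmetric]
    proof -
      have e1: "3 * s - 4 * s^3 - s = 2 * s * (c^2 - s^2)" using sc
        by algebra
      have e2: "3 * c - (4 * c^3 - 3 * c) = 2 * c * (1 + 2 * s^2)" using sc
        by algebra
      show "(3 * s - 4 * s^3 - s) / (3 * c - (4 * c^3 - 3 * c)) = s * (c^2 - s^2) / (c * (1 + 2 * s^2))"
        unfolding e1 e2 by simp
    qed
    thus ?thesis unfolding t_def by simp
  qed
  have bl: "\<beta> < pi/2" using assms(4) tx arctan_ubound[of x] by linarith
  have cbp: "0 < cos \<beta>" using assms(3) bl by (intro cos_gt_zero_pi) auto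
  define u where "u = tan \<beta>"
  have u0: "0 \<le> u" unfolding u_def using assms(3) bl unfolding tan_def using cbp by (intro divide_nonneg_pos sin_ge_zero) auto
  have ux: "u \<le> x"
  proof -
    have "arctan u = \<beta>" unfolding u_def using assms(3) bl by (intro arctan_tan) auto
    hence "arctan u \<le> arctan x" using assms(4) tx by simp
    thus ?thesis by (simp add: arctan_le_iff)
  qed
  have K: "(s + c * u)^2 * (1 + 4 * s^2 * c^2) \<le> 4 * s^2 * c^2 * (1 + u^2)"
    by (rule key_ineq[OF sc sp cp d x_def u0 ux])
  have cb2: "(cos \<beta>)^2 * (1 + u^2) = 1"
    unfolding u_def tan_def using cbp sin_cos_squared_add[of \<beta>]
    by (simp add: field_simps power2_eq_square)
  have f0: "f1 \<alpha> \<beta> 0 = 2 * s * c / (cos \<beta> * (s + c * u))"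
    unfolding f1_def u_def tan_def s_def[symmetric] c_def[symmetric] using cp cbp
    by (simp add: field_simps)
  have tgt: "sqrt (6 - 2 * cos (4 * \<alpha>)) / 2 = sqrt (1 + 4 * s^2 * c^2)"
  proof -
    have "cos (4*\<alpha>) = 1 - 2 * (sin (2*\<alpha>))^2" using cos_double_sin[of "2*\<alpha>"] by simp
    hence "6 - 2 * cos (4 * \<alpha>) = 2^2 * (1 + 4 * s^2 * c^2)"
      unfolding sin_double s_def c_def by (simp add: power_mult_distrib)
    hence "sqrt (6 - 2 * cos (4 * \<alpha>)) = sqrt (2^2) * sqrt (1 + 4 * s^2 * c^2)"
      by (metis real_sqrt_mult)
    hence "sqrt (6 - 2 * cos (4 * \<alpha>)) = 2 * sqrt (1 + 4 * s^2 * c^2)" by simp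
    thus ?thesis by simp
  qed
  have Dp: "0 < cos \<beta> * (s + c * u)" using cbp sp cp u0 by (simp add: add_pos_nonneg)
  have main: "sqrt (1 + 4 * s^2 * c^2) \<le> 2 * s * c / (cos \<beta> * (s + c * u))"
  proof -
    have "(cos \<beta> * (s + c * u))^2 * (1 + 4 * s^2 * c^2) \<le> (2 * s * c)^2"
    proof -
      have "(cos \<beta> * (s + c * u))^2 * (1 + 4 * s^2 * c^2) = (cos \<beta>)^2 * ((s + c * u)^2 * (1 + 4 * s^2 * c^2))"
        by (simp add: power_mult_distrib)
      also have "\<dots> \<le> (cos \<beta>)^2 * (4 * s^2 * c^2 * (1 + u^2))"
        using K by (intro mult_left_mono) auto
      also have "\<dots> = 4 * s^2 * c^2 * ((cos \<beta>)^2 * (1 + u^2))" by simp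
      also have "\<dots> = (2 * s * c)^2" unfolding cb2 by (simp add: power_mult_distrib)
      finally show ?thesis .
    qed
    hence "1 + 4 * s^2 * c^2 \<le> (2 * s * c / (cos \<beta> * (s + c * u)))^2"
      using Dp by (rule aux_div)
    hence "sqrt (1 + 4 * s^2 * c^2) \<le> sqrt ((2 * s * c / (cos \<beta> * (s + c * u)))^2)"
      by (rule real_sqrt_le_mono)
    also have "\<dots> = 2 * s * c / (cos \<beta> * (s + c * u))" using Dp sp cp by simp
    finally show ?thesis .
  qed
  have cont: "continuous_on {0..1} (f1 \<alpha> \<beta>)"
  proof -
    have "\<forall>r\<in>{0..1::real}. sqrt (1 + r^2 + 2 * cos (2 * \<alpha>) * r) \<noteq> 0"
    proof
      fix r :: real assume "r \<in> {0..1}"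
      hence "0 \<le> 2 * cos (2 * \<alpha>) * r" using c2 by simp
      moreover have "0 \<le> r^2" by simp
      ultimately have "0 < 1 + r^2 + 2 * cos (2 * \<alpha>) * r" by linarith
      thus "sqrt (1 + r^2 + 2 * cos (2 * \<alpha>) * r) \<noteq> 0" by simp
    qed
    thus ?thesis unfolding f1_def[abs_def] by (intro continuous_intros) auto
  qed
  have bdd: "bdd_above (f1 \<alpha> \<beta> ` {0..1})"
    by (intro bounded_imp_bdd_above compact_imp_bounded compact_continuous_image cont) auto
  show ?thesis
    by (rule cSUP_upper2[OF bdd, of 0]) (use tgt main f0 in auto)
qed

end
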